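(* Assume (H1)–(H4) as described in the context, let $\mu(E)=\int_{V_1^{c,d}}\chi_E(x,\varphi(x))\,dx$ for Borel $E\subset\mathbb{R}^4$, and let $E_\mu$ be its type set. If $(\frac1p,\frac1q)\in E_\mu$, then $\frac1q\ge\frac1p-\frac{\alpha_1+\alpha_2}{\alpha_1+\alpha_2+2m}$.
   Context: Fix $\alpha_1,\alpha_2>0$ with $\alpha_1\neq\alpha_2$. For $t>0$ and $x=(x_1,x_2)\in\mathbb{R}^2$ put $t\bullet x=(t^{\alpha_1}x_1,t^{\alpha_2}x_2)$. For reals $a<b$ let $V^{a,b}=\{t\bullet(1,s): a<s<b,\ t>0\}$, and for $a<c<d<b$ let $V^{c,d}=\{t\bullet(1,s):c<s<d,\ t>0\}$ and $V_1^{c,d}=\{t\bullet(1,s): c<s<d,\ 0<t<1\}$. Let $\varphi=(\varphi_1,\varphi_2):V^{a,b}\to\mathbb{R}^2$. For $x\in V^{a,b}$ let $\varphi_j''(x)$ be the Hessian of $\varphi_j$ at $x$ and $Q_x(\zeta)=\det(\zeta_1\varphi_1''(x)+\zeta_2\varphi_2''(x))$. A point $x$ is elliptic for $\varphi$ if $\min_{\zeta\in S^1}|Q_x(\zeta)|>0$. Assumptions: (H1) $\varphi$ is real analytic on $V^{a,b}$. (H2) For some $m\ge 3(\alpha_1+\alpha_2)$, $\varphi(t\bullet x)=t^m\varphi(x)$ for all $x\in V^{a,b}$, $t>0$. (H3) $a<c<d<b$ and $\sigma\in[c,d]$ are such that the set of nonelliptic points of $\varphi$ in $\overline{V^{c,d}}\setminus\{\mathbf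 0\}$ is exactly $\{t\bullet(1,\sigma):t>0\}$. (H4) With $\beta=2(m-\alpha_1-\alpha_2)$, there are positive integers $n_1,n_2$ and constants $D,\delta>0$ such that: if $\sigma\in(c,d]$ then $\min_{\zeta\in S^1}|Q_{t\bullet(1,s)}(\zeta)|\ge D t^\beta|s-\sigma|^{n_1}$ for $s\in(\sigma-\delta,\sigma)$, $t>0$; if $\sigma\in[c,d)$ then the same holds with $n_2$ for $s\in(\sigma,\sigma+\delta)$, $t>0$; and $\max\{n_1,n_2\}<\frac{2m}{\alpha_1+\alpha_2}-3$. Type set: $E_\mu$ is the set of $(\frac1p,\frac1q)\in[0,1]^2$ for which there is $C_{p,q}>0$ with $\|\mu*f\|_{L^q(\mathbb{R}^4)}\le C_{p,q}\|f\|_{L^p(\mathbb{R}^4)}$ for all $f\in\mathcal{S}(\mathbb{R}^4)$. *)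

theory Defs
  imports "HOL-Analysis.Analysis" "HOL-Probability.Essential_Supremum"
begin

text \<open>Points of R^2 are pairs of reals; points of R^4 are pairs of points of R^2,
  so that the graph point (x, phi x) is literally an element of R^4.\<close>

type_synonym R2 = "real \<times> real"
type_synonym R4 = "R2 \<times> R2"

definition dil :: "real \<Rightarrow> real \<Rightarrow> real \<Rightarrow> R2 \<Rightarrow> R2" where
  "dil a1 a2 t x = (t powr a1 * fst x, t powr a2 * snd x)"

definition cone :: "real \<Rightarrow> real \<Rightarrow> real \<Rightarrow> real \<Rightarrow> R2 set" where
  "cone a1 a2 a b = {dil a1 a2 t (1, s) | s t. a < s \<and> s < b \<and> 0 < t}"

definition cone1 :: "real \<Rightarrow> real \<Rightarrow> real \<Rightarrow> real \<Rightarrow> R2 set" where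
  "cone1 a1 a2 c d = {dil a1 a2 t (1, s) | s t. c < s \<and> s < d \<and> 0 < t \<and> t < 1}"

definition real_analytic_on2 :: "(R2 \<Rightarrow> real) \<Rightarrow> R2 set \<Rightarrow> bool" where
  "real_analytic_on2 f U \<longleftrightarrow>
     (\<forall>x\<in>U. \<exists>r>0. \<exists>c :: nat \<Rightarrow> nat \<Rightarrow> real. ball x r \<subseteq> U \<and>
        (\<forall>y\<in>ball x r.
           ((\<lambda>(i, j). c i j * (fst y - fst x) ^ i * (snd y - snd x) ^ j) has_sum f y) UNIV))"

definition pd1 :: "(R2 \<Rightarrow> real) \<Rightarrow> R2 \<Rightarrow> real" where
  "pd1 f x = deriv (\<lambda>u. f (u, snd x)) (fst x)"

definition pd2 :: "(R2 \<Rightarrow> real) \<Rightarrow> R2 \<Rightarrow> real" where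
  "pd2 f x = deriv (\<lambda>v. f (fst x, v)) (snd x)"

text \<open>Q_x(zeta) = det(zeta1 phi1''(x) + zeta2 phi2''(x)), with Hessian entries
  H_{ij} = d_i d_j; the 2x2 determinant written out.\<close>
definition Qform :: "(R2 \<Rightarrow> R2) \<Rightarrow> R2 \<Rightarrow> R2 \<Rightarrow> real" where
  "Qform \<phi> x \<zeta> =
     (let f1 = (\<lambda>y. fst (\<phi> y)); f2 = (\<lambda>y. snd (\<phi> y));
          h11 = fst \<zeta> * pd1 (pd1 f1) x + snd \<zeta> * pd1 (pd1 f2) x;
          h12 = fst \<zeta> * pd1 (pd2 f1) x + snd \<zeta> * pd1 (pd2 f2) x;
          h21 = fst \<zeta> * pd2 (pd1 f1) x + snd \<zeta> * pd2 (pd1 f2) x;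
          h22 = fst \<zeta> * pd2 (pd2 f1) x + snd \<zeta> * pd2 (pd2 f2) x
      in h11 * h22 - h12 * h21)"

text \<open>min over the unit circle of |Q_x| (the minimum exists by compactness;
  we write it as the infimum).\<close>
definition minQ :: "(R2 \<Rightarrow> R2) \<Rightarrow> R2 \<Rightarrow> real" where
  "minQ \<phi> x = (INF \<zeta>\<in>{\<zeta>::R2. (fst \<zeta>)\<^sup>2 + (snd \<zeta>)\<^sup>2 = 1}. \<bar>Qform \<phi> x \<zeta>\<bar>)"

definition elliptic :: "(R2 \<Rightarrow> R2) \<Rightarrow> R2 \<Rightarrow> bool" where
  "elliptic \<phi> x \<longleftrightarrow> minQ \<phi> x > 0"

text \<open>The measure mu(E) = int_{V_1^{c,d}} chi_E(x, phi x) dx on R^4 (push-forward of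
  Lebesgue measure on V_1^{c,d} under the graph map).\<close>
definition graph_measure :: "(R2 \<Rightarrow> R2) \<Rightarrow> R2 set \<Rightarrow> R4 measure" where
  "graph_measure \<phi> W = distr (restrict_space lborel W) borel (\<lambda>x. (x, \<phi> x))"

definition meas_conv :: "R4 measure \<Rightarrow> (R4 \<Rightarrow> complex) \<Rightarrow> R4 \<Rightarrow> complex" where
  "meas_conv \<mu> f z = (\<integral>y. f (z - y) \<partial>\<mu>)"

fun iter_partial :: "R4 list \<Rightarrow> (R4 \<Rightarrow> complex) \<Rightarrow> R4 \<Rightarrow> complex" where
  "iter_partial [] f = f"
| "iter_partial (e # es) f = (\<lambda>x. frechet_derivative (iter_partial es f) (at x) e)"

definition schwartz :: "(R4 \<Rightarrow> complex) \<Rightarrow> bool" where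
  "schwartz f \<longleftrightarrow>
     (\<forall>es \<in> lists (Basis :: R4 set).
        (\<forall>x. iter_partial es f differentiable (at x)) \<and>
        (\<forall>N::nat. bounded (range (\<lambda>x. (1 + norm x) ^ N * norm (iter_partial es f x)))))"

definition enn_powr :: "ennreal \<Rightarrow> real \<Rightarrow> ennreal" where
  "enn_powr x r = (if x = \<infinity> then \<infinity> else ennreal (enn2real x powr r))"

text \<open>L^p norm on R^4 parametrised by rp = 1/p in [0,1]; rp = 0 means p = infinity.\<close>
definition Lnorm :: "real \<Rightarrow> (R4 \<Rightarrow> complex) \<Rightarrow> ennreal" where
  "Lnorm rp g =
     (if rp = 0 then esssup lborel (\<lambda>x. ennreal (norm (g x)))
      else enn_powr (\<integral>\<^sup>+ x. enn_powr (ennreal (norm (g x))) (1 / rp) \<partial>lborel) rp)"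

definition type_set :: "R4 measure \<Rightarrow> (real \<times> real) set" where
  "type_set \<mu> = {(rp, rq). 0 \<le> rp \<and> rp \<le> 1 \<and> 0 \<le> rq \<and> rq \<le> 1 \<and>
      (\<exists>C>0. \<forall>f. schwartz f \<longrightarrow>
          Lnorm rq (meas_conv \<mu> f) \<le> ennreal C * Lnorm rp f)}"

end

theory Submission
  imports Defs "HOL-Probability.Distributions"
begin

datatype pexp = PConst real | PCoord R4 | PAdd pexp pexp | PMul pexp pexp

fun peval :: "pexp \<Rightarrow> R4 \<Rightarrow> real" where
  "peval (PConst c) x = c"
| "peval (PCoord v) x = x \<bullet> v"
| "peval (PAdd p q) x = peval p x + peval q x"
| "peval (PMul p q) x = peval p x * peval q x"

fun pder :: "R4 \<Rightarrow> pexp \<Rightarrow> pexp" where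
  "pder h (PConst c) = PConst 0"
| "pder h (PCoord v) = PConst (h \<bullet> v)"
| "pder h (PAdd p q) = PAdd (pder h p) (pder h q)"
| "pder h (PMul p q) = PAdd (PMul p (pder h q)) (PMul (pder h p) q)"

lemma peval_deriv: "((\<lambda>x. peval p x) has_derivative (\<lambda>h. peval (pder h p) x)) (at x)"
proof (induction p)
  case (PConst c) then show ?case by (simp add: has_derivative_const)
next
  case (PCoord v) then show ?case
    by (simp add: bounded_linear.has_derivative[OF bounded_linear_inner_left] has_derivative_ident)
next
  case (PAdd p q) then show ?case by (simp add: has_derivative_add)
next
  case (PMul p q) then show ?case
    using has_derivative_mult[OF PMul.IH(1) PMul.IH(2)] by (simp add: algebra_simps)
qed

lemma peval_bound: "\<exists>C k. C \<ge> 0 \<and> (\<forall>x. \<bar>peval p x\<bar> \<le> C * (1 + norm x) ^ k)"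
proof (induction p)
  case (PConst c) then show ?case by (intro exI[of _ "\<bar>c\<bar>"] exI[of _ 0]) auto
next
  case (PCoord v)
  show ?case
  proof (intro exI[of _ "norm v"] exI[of _ 1] conjI allI)
    fix x :: R4
    have "\<bar>x \<bullet> v\<bar> \<le> norm x * norm v" by (rule Cauchy_Schwarz_ineq2)
    also have "\<dots> \<le> norm v * (1 + norm x) ^ 1" by (simp add: mult.commute mult_left_mono)
    finally show "\<bar>peval (PCoord v) x\<bar> \<le> norm v * (1 + norm x) ^ 1" by simp
  qed simp
next
  case (PAdd p q)
  then obtain C1 k1 C2 k2 where h: "C1 \<ge> 0" "\<forall>x. \<bar>peval p x\<bar> \<le> C1 * (1 + norm x) ^ k1"
    "C2 \<ge> 0" "\<forall>x. \<bar>peval q x\<bar> \<le> C2 * (1 + norm x) ^ k2" by blast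
  show ?case
  proof (intro exI[of _ "C1 + C2"] exI[of _ "k1 + k2"] conjI allI)
    fix x :: R4
    have b: "(1 + norm x) ^ k1 \<le> (1 + norm x) ^ (k1 + k2)" "(1 + norm x) ^ k2 \<le> (1 + norm x) ^ (k1 + k2)"
      by (intro power_increasing; simp)+
    have "\<bar>peval (PAdd p q) x\<bar> \<le> C1 * (1 + norm x) ^ k1 + C2 * (1 + norm x) ^ k2"
      using abs_triangle_ineq[of "peval p x" "peval q x"] h(2)[rule_format, of x] h(4)[rule_format, of x]
      by simp
    also have "\<dots> \<le> C1 * (1 + norm x) ^ (k1 + k2) + C2 * (1 + norm x) ^ (k1 + k2)"
      using b h by (intro add_mono mult_left_mono) auto
    finally show "\<bar>peval (PAdd p q) x\<bar> \<le> (C1 + C2) * (1 + norm x) ^ (k1 + k2)"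
      by (simp add: algebra_simps)
  qed (use h in simp)
next
  case (PMul p q)
  then obtain C1 k1 C2 k2 where h: "C1 \<ge> 0" "\<forall>x. \<bar>peval p x\<bar> \<le> C1 * (1 + norm x) ^ k1"
    "C2 \<ge> 0" "\<forall>x. \<bar>peval q x\<bar> \<le> C2 * (1 + norm x) ^ k2" by blast
  show ?case
  proof (intro exI[of _ "C1 * C2"] exI[of _ "k1 + k2"] conjI allI)
    fix x :: R4
    have "\<bar>peval (PMul p q) x\<bar> = \<bar>peval p x\<bar> * \<bar>peval q x\<bar>" by (simp add: abs_mult)
    also have "\<dots> \<le> (C1 * (1 + norm x) ^ k1) * (C2 * (1 + norm x) ^ k2)"
      using h(1,3) h(2)[rule_format, of x] h(4)[rule_format, of x] by (intro mult_mono) auto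
    finally show "\<bar>peval (PMul p q) x\<bar> \<le> (C1 * C2) * (1 + norm x) ^ (k1 + k2)"
      by (simp add: algebra_simps power_add)
  qed (use h in simp)
qed

lemma poly_exp_bound:
  fixes lam :: real and M :: nat
  assumes "lam > 0" "r \<ge> 0"
  shows "(1 + r) ^ M * exp (- lam * r\<^sup>2) \<le> exp (M\<^sup>2 / (4 * lam))"
proof -
  have "(1 + r) ^ M \<le> exp r ^ M"
    using assms by (intro power_mono) (auto simp: exp_ge_add_one_self)
  also have "\<dots> = exp (M * r)" by (simp add: exp_of_nat_mult)
  finally have "(1 + r) ^ M * exp (- lam * r\<^sup>2) \<le> exp (M * r) * exp (- lam * r\<^sup>2)"
    by (intro mult_right_mono) auto
  also have "\<dots> = exp (M * r - lam * r\<^sup>2)" by (simp add: exp_add[symmetric])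
  also have "\<dots> \<le> exp (M\<^sup>2 / (4 * lam))"
  proof -
    have "0 \<le> lam * (r - M / (2 * lam))\<^sup>2" using assms by simp
    also have "lam * (r - M / (2 * lam))\<^sup>2 = lam * r\<^sup>2 - M * r + M\<^sup>2 / (4 * lam)"
      using assms by (simp add: power2_eq_square field_simps)
    finally show ?thesis by simp
  qed
  finally show ?thesis .
qed

lemma gauss_step:
  "((\<lambda>x. complex_of_real (peval P x * exp (- peval q x))) has_derivative
     (\<lambda>h. complex_of_real (peval (PAdd (pder h P) (PMul (PConst (-1)) (PMul P (pder h q)))) x
        * exp (- peval q x)))) (at x)"
proof -
  have d1: "((\<lambda>x. peval P x * exp (- peval q x)) has_derivative
     (\<lambda>h. peval P x * (exp (- peval q x) * (- peval (pder h q) x)) + peval (pder h P) x * exp (- peval q x))) (at x)"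
  proof (rule has_derivative_mult[OF peval_deriv])
    show "((\<lambda>x. exp (- peval q x)) has_derivative (\<lambda>h. exp (- peval q x) * - peval (pder h q) x)) (at x)"
      using has_derivative_exp[OF has_derivative_minus[OF peval_deriv[of q x]]] by (simp add: mult.commute)
  qed
  have d2: "((\<lambda>x. complex_of_real (peval P x * exp (- peval q x))) has_derivative
     (\<lambda>h. complex_of_real (peval P x * (exp (- peval q x) * (- peval (pder h q) x)) + peval (pder h P) x * exp (- peval q x)))) (at x)"
    by (rule has_derivative_of_real[OF d1])
  show ?thesis using d2 by (simp add: algebra_simps)
qed

lemma schwartz_gauss:
  fixes q :: pexp and lam :: real
  assumes lam: "lam > 0" and q: "\<And>x. peval q x \<ge> lam * (norm x)\<^sup>2"
  shows "schwartz (\<lambda>x. complex_of_real (exp (- peval q x)))"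
proof -
  let ?f = "\<lambda>x. complex_of_real (exp (- peval q x))"
  have form: "\<exists>P. iter_partial es ?f = (\<lambda>x. complex_of_real (peval P x * exp (- peval q x)))" for es
  proof (induction es)
    case Nil then show ?case by (intro exI[of _ "PConst 1"]) simp
  next
    case (Cons e es)
    then obtain P where P: "iter_partial es ?f = (\<lambda>x. complex_of_real (peval P x * exp (- peval q x)))" by blast
    show ?case
      by (intro exI[of _ "PAdd (pder e P) (PMul (PConst (-1)) (PMul P (pder e q)))"])
         (simp only: iter_partial.simps P frechet_derivative_at[OF gauss_step, symmetric])
  qed
  show ?thesis unfolding schwartz_def
  proof (intro ballI conjI allI)
    fix es :: "R4 list" and x :: R4
    obtain P where P: "iter_partial es ?f = (\<lambda>x. complex_of_real (peval P x * exp (- peval q x)))"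
      using form by blast
    show "iter_partial es ?f differentiable (at x)"
      unfolding P differentiable_def using gauss_step by blast
  next
    fix es :: "R4 list" and N :: nat
    obtain P where P: "iter_partial es ?f = (\<lambda>x. complex_of_real (peval P x * exp (- peval q x)))"
      using form by blast
    obtain C k where Ck: "C \<ge> 0" "\<And>x. \<bar>peval P x\<bar> \<le> C * (1 + norm x) ^ k"
      using peval_bound by blast
    show "bounded (range (\<lambda>x. (1 + norm x) ^ N * norm (iter_partial es ?f x)))"
      unfolding bounded_real
    proof (intro exI[of _ "C * exp ((N + k)\<^sup>2 / (4 * lam))"] ballI)
      fix y assume "y \<in> range (\<lambda>x. (1 + norm x) ^ N * norm (iter_partial es ?f x))"
      then obtain x where y: "y = (1 + norm x) ^ N * norm (iter_partial es ?f x)" by blast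
      have "y = (1 + norm x) ^ N * \<bar>peval P x\<bar> * exp (- peval q x)"
        by (simp add: y P norm_mult abs_mult)
      also have "\<dots> \<le> (1 + norm x) ^ N * (C * (1 + norm x) ^ k) * exp (- (lam * (norm x)\<^sup>2))"
        using Ck q[of x] by (intro mult_mono) auto
      also have "\<dots> = C * ((1 + norm x) ^ (N + k) * exp (- lam * (norm x)\<^sup>2))"
        by (simp add: power_add algebra_simps)
      also have "\<dots> \<le> C * exp ((N + k)\<^sup>2 / (4 * lam))"
        using Ck lam by (intro mult_left_mono poly_exp_bound) auto
      finally show "\<bar>y\<bar> \<le> C * exp ((N + k)\<^sup>2 / (4 * lam))"
        using y by simp
    qed
  qed
qed

lemma pow_small_bound:
  fixes e r :: real and n :: nat
  assumes "0 \<le> e" "e \<le> r" "0 < r" "n \<ge> 1"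
  shows "e ^ n \<le> (e / r) * r ^ n"
proof -
  have "e ^ n = (e / r) ^ n * r ^ n" using assms by (simp add: power_divide)
  also have "(e / r) ^ n \<le> (e / r) ^ 1"
    using assms by (intro power_decreasing) auto
  finally show ?thesis using assms by (simp add: mult_right_mono)
qed

lemma has_sum_delta00: "((\<lambda>p::nat \<times> nat. if p = (0, 0) then a else 0) has_sum a) UNIV"
proof -
  have h2': "((\<lambda>p::nat \<times> nat. if p = (0, 0) then a else 0) has_sum a) {(0,0)}"
    by (rule has_sum_finiteI) auto
  show ?thesis
    using h2' has_sum_cong_neutral[where S=UNIV and T="{(0,0)}" and f="\<lambda>p::nat \<times> nat. if p = (0, 0) then a else 0"
          and g="\<lambda>p::nat \<times> nat. if p = (0, 0) then a else 0"]
    by auto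
qed

lemma has_sum_delta00': "((\<lambda>(i::nat, j::nat). if (i, j) = (0, 0) then a else 0) has_sum a) UNIV"
proof -
  have "(\<lambda>(i::nat, j::nat). if (i, j) = (0, 0) then a else 0) = (\<lambda>p. if p = (0, 0) then a else 0)"
    by (auto simp: fun_eq_iff)
  then show ?thesis using has_sum_delta00 by simp
qed

lemma analytic_isCont:
  assumes A: "real_analytic_on2 f U" and xU: "x \<in> U"
  shows "isCont f x"
proof -
  obtain r c where r: "r > 0" "ball x r \<subseteq> U" and
    hs: "\<And>y. y \<in> ball x r \<Longrightarrow>
      ((\<lambda>(i, j). c i j * (fst y - fst x) ^ i * (snd y - snd x) ^ j) has_sum f y) UNIV"
    using A xU unfolding real_analytic_on2_def by blast
  define \<rho> where "\<rho> = r / 2"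
  have \<rho>: "\<rho> > 0" using r by (simp add: \<rho>_def)
  define ys where "ys = (fst x + \<rho>, snd x + \<rho>)"
  have "dist x ys = sqrt (\<rho>\<^sup>2 + \<rho>\<^sup>2)"
    by (cases x) (simp add: ys_def dist_Pair_Pair dist_real_def)
  also have "\<dots> = sqrt (2 * \<rho>\<^sup>2)" by simp
  also have "\<dots> = sqrt 2 * sqrt (\<rho>\<^sup>2)" by (rule real_sqrt_mult)
  also have "\<dots> = sqrt 2 * \<rho>" using \<rho> by simp
  also have "\<dots> < r" using \<rho> sqrt2_less_2 by (simp add: \<rho>_def)
  finally have ysb: "ys \<in> ball x r" by simp
  have "(\<lambda>(i, j). c i j * \<rho> ^ i * \<rho> ^ j) summable_on UNIV"
    using hs[OF ysb] unfolding ys_def summable_on_def by auto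
  then have "(\<lambda>p. norm ((\<lambda>(i, j). c i j * \<rho> ^ i * \<rho> ^ j) p)) summable_on UNIV"
    using summable_on_iff_abs_summable_on_real by blast
  moreover have "(\<lambda>p. norm ((\<lambda>(i, j). c i j * \<rho> ^ i * \<rho> ^ j) p)) = (\<lambda>(i, j). \<bar>c i j\<bar> * \<rho> ^ i * \<rho> ^ j)"
    using \<rho> by (auto simp: abs_mult)
  ultimately have "(\<lambda>(i, j). \<bar>c i j\<bar> * \<rho> ^ i * \<rho> ^ j) summable_on UNIV" by simp
  then obtain S where S: "((\<lambda>(i, j). \<bar>c i j\<bar> * \<rho> ^ i * \<rho> ^ j) has_sum S) UNIV"
    unfolding summable_on_def by blast
  have S0: "S \<ge> 0"
    using has_sum_mono[OF has_sum_0 S] \<rho> by fastforce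
  have fx: "f x = c 0 0"
  proof -
    have h1: "((\<lambda>(i, j). c i j * (fst x - fst x) ^ i * (snd x - snd x) ^ j) has_sum f x) UNIV"
      using hs[of x] r by simp
    have e: "(\<lambda>(i::nat, j::nat). c i j * (fst x - fst x) ^ i * (snd x - snd x) ^ j)
       = (\<lambda>p. if p = (0, 0) then c 0 0 else 0)"
    proof
      fix p :: "nat \<times> nat"
      show "(case p of (i, j) \<Rightarrow> c i j * (fst x - fst x) ^ i * (snd x - snd x) ^ j)
         = (if p = (0, 0) then c 0 0 else 0)"
        by (cases p; cases "fst p"; cases "snd p") simp_all
    qed
    have h2: "((\<lambda>p::nat \<times> nat. if p = (0, 0) then c 0 0 else 0) has_sum c 0 0) UNIV"
      by (rule has_sum_delta00)
    show ?thesis using has_sum_unique[OF h1[unfolded e] h2] .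
  qed
  have est: "\<bar>f y - f x\<bar> \<le> (e / \<rho>) * S"
    if yb: "y \<in> ball x r" and e: "0 \<le> e" "e \<le> \<rho>" and y1: "\<bar>fst y - fst x\<bar> \<le> e"
      and y2: "\<bar>snd y - snd x\<bar> \<le> e" for y e
  proof -
    define T where "T = (\<lambda>(i::nat, j::nat). c i j * (fst y - fst x) ^ i * (snd y - snd x) ^ j)"
    define D where "D = (\<lambda>(i::nat, j::nat). if (i, j) = (0, 0) then c 0 0 else 0)"
    define a where "a = (\<lambda>p. T p - D p)"
    have h0: "(D has_sum c 0 0) UNIV"
      unfolding D_def by (rule has_sum_delta00')
    have h0': "((\<lambda>p. - D p) has_sum - c 0 0) UNIV"
      using h0 by (simp add: has_sum_uminus)
    have "((\<lambda>p. T p + - D p) has_sum (f y + - c 0 0)) UNIV"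
      by (rule has_sum_add[OF hs[OF yb, folded T_def] h0'])
    then have ha: "(a has_sum (f y - f x)) UNIV"
      unfolding a_def fx by simp
    define b where "b = (\<lambda>(i::nat, j::nat). (e / \<rho>) * (\<bar>c i j\<bar> * \<rho> ^ i * \<rho> ^ j))"
    have hb: "(b has_sum ((e / \<rho>) * S)) UNIV"
      unfolding b_def using has_sum_cmult_right[OF S, of "e / \<rho>"] by (simp add: case_prod_beta')
    have hb': "((\<lambda>p. - b p) has_sum (- ((e / \<rho>) * S))) UNIV"
      using hb by (simp add: has_sum_uminus)
    have ab: "\<bar>a p\<bar> \<le> b p" for p
    proof (cases p)
      case (Pair i j)
      show ?thesis
      proof (cases "(i, j) = (0, 0)")
        case True then show ?thesis using Pair e \<rho> by (simp add: a_def b_def T_def D_def)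
      next
        case False
        then have n: "i + j \<ge> 1" by auto
        have "\<bar>a p\<bar> = \<bar>c i j\<bar> * \<bar>fst y - fst x\<bar> ^ i * \<bar>snd y - snd x\<bar> ^ j"
          using Pair False by (auto simp: a_def T_def D_def abs_mult power_abs)
        also have "\<dots> \<le> \<bar>c i j\<bar> * e ^ i * e ^ j"
          using y1 y2 by (intro mult_mono power_mono) auto
        also have "\<dots> = \<bar>c i j\<bar> * e ^ (i + j)" by (simp add: power_add)
        also have "\<dots> \<le> \<bar>c i j\<bar> * ((e / \<rho>) * \<rho> ^ (i + j))"
          using pow_small_bound[OF e \<rho> n] by (intro mult_left_mono) auto
        also have "\<dots> = b p" by (simp add: Pair b_def power_add)
        finally show ?thesis .
      qed
    qed
    have "f y - f x \<le> (e / \<rho>) * S"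
      using has_sum_mono[OF ha hb] ab by (meson abs_le_D1)
    moreover have "- ((e / \<rho>) * S) \<le> f y - f x"
      using has_sum_mono[OF hb' ha] ab by (meson abs_le_D2 minus_le_iff)
    ultimately show ?thesis by linarith
  qed
  show ?thesis
    unfolding continuous_at_eps_delta
  proof (intro allI impI)
    fix \<epsilon> :: real assume \<epsilon>: "\<epsilon> > 0"
    define e where "e = min \<rho> (\<epsilon> * \<rho> / (2 * (S + 1)))"
    have e0: "e > 0" using \<rho> \<epsilon> S0 by (simp add: e_def)
    show "\<exists>d>0. \<forall>x'. dist x' x < d \<longrightarrow> dist (f x') (f x) < \<epsilon>"
    proof (intro exI[of _ e] conjI allI impI)
      fix y assume d: "dist y x < e"
      have "\<bar>fst y - fst x\<bar> \<le> dist y x" "\<bar>snd y - snd x\<bar> \<le> dist y x"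
        by (metis dist_fst_le dist_real_def) (metis dist_snd_le dist_real_def)
      then have y12: "\<bar>fst y - fst x\<bar> \<le> e" "\<bar>snd y - snd x\<bar> \<le> e" using d by auto
      have yb: "y \<in> ball x r" using d e0 by (simp add: e_def \<rho>_def dist_commute)
      have "\<bar>f y - f x\<bar> \<le> (e / \<rho>) * S"
        by (rule est[OF yb]) (use e0 y12 in \<open>auto simp: e_def\<close>)
      also have "\<dots> \<le> (\<epsilon> / (2 * (S + 1))) * S"
        using \<rho> S0 by (intro mult_right_mono) (auto simp: e_def divide_le_eq)
      also have "\<dots> < \<epsilon>"
        using S0 \<epsilon> by (simp add: field_simps add_nonneg_pos)
      finally show "dist (f y) (f x) < \<epsilon>" by (simp add: dist_real_def)
    qed (use e0 in simp)
  qed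
qed

lemma cone1_char:
  assumes a1: "\<alpha>1 > 0" and a2: "\<alpha>2 > 0"
  shows "x \<in> cone1 \<alpha>1 \<alpha>2 c d \<longleftrightarrow>
    0 < fst x \<and> fst x < 1 \<and> c < snd x / fst x powr (\<alpha>2 / \<alpha>1) \<and> snd x / fst x powr (\<alpha>2 / \<alpha>1) < d"
proof
  assume "x \<in> cone1 \<alpha>1 \<alpha>2 c d"
  then obtain s t where x: "x = dil \<alpha>1 \<alpha>2 t (1, s)" and st: "c < s" "s < d" "0 < t" "t < 1"
    unfolding cone1_def by blast
  have f: "fst x = t powr \<alpha>1" "snd x = t powr \<alpha>2 * s" by (simp_all add: x dil_def)
  have "fst x powr (\<alpha>2 / \<alpha>1) = t powr \<alpha>2"
    using a1 by (simp add: f powr_powr)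
  then have r: "snd x / fst x powr (\<alpha>2 / \<alpha>1) = s" using st by (simp add: f)
  have "t powr \<alpha>1 < 1 powr \<alpha>1" using st a1 by (intro powr_less_mono2) auto
  then show "0 < fst x \<and> fst x < 1 \<and> c < snd x / fst x powr (\<alpha>2 / \<alpha>1) \<and> snd x / fst x powr (\<alpha>2 / \<alpha>1) < d"
    using r st by (simp add: f)
next
  assume h: "0 < fst x \<and> fst x < 1 \<and> c < snd x / fst x powr (\<alpha>2 / \<alpha>1) \<and> snd x / fst x powr (\<alpha>2 / \<alpha>1) < d"
  define t where "t = fst x powr (1 / \<alpha>1)"
  define s where "s = snd x / fst x powr (\<alpha>2 / \<alpha>1)"
  have t0: "0 < t" using h by (simp add: t_def)
  have "fst x powr (1 / \<alpha>1) < 1 powr (1 / \<alpha>1)" using h a1 by (intro powr_less_mono2) auto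
  then have t1: "t < 1" by (simp add: t_def)
  have "t powr \<alpha>1 = fst x" using a1 h by (simp add: t_def powr_powr)
  moreover have "t powr \<alpha>2 = fst x powr (\<alpha>2 / \<alpha>1)" using a1 h by (simp add: t_def powr_powr)
  ultimately have "x = dil \<alpha>1 \<alpha>2 t (1, s)"
    using h by (cases x) (simp add: dil_def s_def)
  then show "x \<in> cone1 \<alpha>1 \<alpha>2 c d"
    unfolding cone1_def using h t0 t1 by (auto simp: s_def)
qed

lemma open_cone1:
  assumes a1: "\<alpha>1 > 0" and a2: "\<alpha>2 > 0"
  shows "open (cone1 \<alpha>1 \<alpha>2 c d)"
proof -
  let ?S = "{x::R2. 0 < fst x}"
  let ?F = "\<lambda>x::R2. (fst x, snd x / fst x powr (\<alpha>2 / \<alpha>1))"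
  have "open ?S" using open_Collect_less[of "\<lambda>_. 0" fst] by (simp add: continuous_on_fst continuous_on_id)
  moreover have "continuous_on ?S ?F"
    by (intro continuous_intros) auto
  ultimately have "open (?S \<inter> ?F -` ({0<..<1} \<times> {c<..<d}))"
    by (intro continuous_open_preimage open_Times) auto
  moreover have "?S \<inter> ?F -` ({0<..<1} \<times> {c<..<d}) = cone1 \<alpha>1 \<alpha>2 c d"
    using cone1_char[OF a1 a2] by auto
  ultimately show ?thesis by simp
qed

lemma cone1_sub_cone:
  assumes "a \<le> c" "d \<le> b"
  shows "cone1 \<alpha>1 \<alpha>2 c d \<subseteq> cone \<alpha>1 \<alpha>2 a b"
  using assms unfolding cone1_def cone_def by fastforce

lemma dil_dil: "t > 0 \<Longrightarrow> u > 0 \<Longrightarrow> dil \<alpha>1 \<alpha>2 u (dil \<alpha>1 \<alpha>2 t x) = dil \<alpha>1 \<alpha>2 (u * t) x"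
  by (simp add: dil_def powr_mult)

lemma dil_cone1:
  assumes "x \<in> cone1 \<alpha>1 \<alpha>2 c d" "0 < u" "u \<le> 1"
  shows "dil \<alpha>1 \<alpha>2 u x \<in> cone1 \<alpha>1 \<alpha>2 c d"
proof -
  obtain s t where x: "x = dil \<alpha>1 \<alpha>2 t (1, s)" and st: "c < s" "s < d" "0 < t" "t < 1"
    using assms(1) unfolding cone1_def by blast
  have "u * t \<le> 1 * t" using st assms by (intro mult_right_mono) auto
  then have "u * t < 1" using st by linarith
  moreover have "dil \<alpha>1 \<alpha>2 u x = dil \<alpha>1 \<alpha>2 (u * t) (1, s)" using x st assms by (simp add: dil_dil)
  ultimately show ?thesis unfolding cone1_def
    by (intro CollectI exI[of _ s] exI[of _ "u * t"]) (use st assms in auto)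
qed

lemma mem_cbox_R2: "(x::R2) \<in> cbox (a1, a2) (b1, b2) \<longleftrightarrow> a1 \<le> fst x \<and> fst x \<le> b1 \<and> a2 \<le> snd x \<and> snd x \<le> b2"
  by (cases x) (simp add: cbox_Pair_iff)

lemma cone1_bounded:
  assumes a1: "\<alpha>1 > 0" and a2: "\<alpha>2 > 0"
  shows "cone1 \<alpha>1 \<alpha>2 c d \<subseteq> cbox (0, - (\<bar>c\<bar> + \<bar>d\<bar>)) (1, \<bar>c\<bar> + \<bar>d\<bar>)"
proof
  fix x assume "x \<in> cone1 \<alpha>1 \<alpha>2 c d"
  then obtain s t where x: "x = dil \<alpha>1 \<alpha>2 t (1, s)" and st: "c < s" "s < d" "0 < t" "t < 1"
    unfolding cone1_def by blast
  have "t powr \<alpha>1 < 1 powr \<alpha>1" "t powr \<alpha>2 < 1 powr \<alpha>2"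
    using st a1 a2 by (intro powr_less_mono2; auto)+
  then have p: "t powr \<alpha>1 \<le> 1" "0 \<le> t powr \<alpha>2" "t powr \<alpha>2 \<le> 1" by auto
  have sb: "\<bar>s\<bar> \<le> \<bar>c\<bar> + \<bar>d\<bar>" using st by linarith
  have "\<bar>t powr \<alpha>2 * s\<bar> = t powr \<alpha>2 * \<bar>s\<bar>" using p by (simp add: abs_mult)
  also have "\<dots> \<le> 1 * (\<bar>c\<bar> + \<bar>d\<bar>)"
    using p sb by (intro mult_mono) auto
  finally have sx: "\<bar>snd x\<bar> \<le> \<bar>c\<bar> + \<bar>d\<bar>" by (simp add: x dil_def)
  have "- (\<bar>c\<bar> + \<bar>d\<bar>) \<le> snd x" "snd x \<le> \<bar>c\<bar> + \<bar>d\<bar>"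
    using abs_le_D1[OF sx] abs_le_D2[OF sx] by linarith+
  moreover have "0 \<le> fst x" "fst x \<le> 1" using p by (simp_all add: x dil_def)
  ultimately show "x \<in> cbox (0, - (\<bar>c\<bar> + \<bar>d\<bar>)) (1, \<bar>c\<bar> + \<bar>d\<bar>)"
    unfolding mem_cbox_R2 by blast
qed

lemma gauss1:
  assumes p: "p > 0" and h: "h > 0"
  shows "(\<integral>\<^sup>+u. ennreal (exp (- (p * (u / h)\<^sup>2))) \<partial>lborel) = ennreal (sqrt (2 * pi) * (h / sqrt (2 * p)))"
proof -
  define s where "s = h / sqrt (2 * p)"
  have s0: "s > 0" using p h by (simp add: s_def)
  define K where "K = sqrt (2 * pi) * s"
  have K0: "K > 0" using s0 by (simp add: K_def)
  have ss: "2 * s\<^sup>2 = h\<^sup>2 / p" using p by (simp add: s_def power_divide)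
  have sq: "sqrt (2 * pi * s\<^sup>2) = K" using s0 by (simp add: K_def real_sqrt_mult)
  have e: "exp (- (p * (u / h)\<^sup>2)) = K * normal_density 0 s u" for u
  proof -
    have "- (u - 0)\<^sup>2 / (2 * s\<^sup>2) = - (p * (u / h)\<^sup>2)"
      unfolding ss using p h by (simp add: power_divide field_simps)
    then show ?thesis unfolding normal_density_def sq using K0 by simp
  qed
  have "(\<integral>\<^sup>+u. ennreal (exp (- (p * (u / h)\<^sup>2))) \<partial>lborel) = (\<integral>\<^sup>+u. ennreal K * ennreal (normal_density 0 s u) \<partial>lborel)"
    unfolding e using K0 by (simp add: ennreal_mult)
  also have "\<dots> = ennreal K * (\<integral>\<^sup>+u. ennreal (normal_density 0 s u) \<partial>lborel)"
    by (rule nn_integral_cmult) measurable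
  also have "(\<integral>\<^sup>+u. ennreal (normal_density 0 s u) \<partial>lborel) = ennreal (\<integral>u. normal_density 0 s u \<partial>lborel)"
    using s0 by (intro nn_integral_eq_integral) auto
  also have "\<dots> = 1" using integral_normal_density[OF s0] by simp
  finally show ?thesis by (simp add: K_def s_def)
qed

lemma nn_integral_prod_split:
  fixes f :: "'a::euclidean_space \<Rightarrow> ennreal" and g :: "'b::euclidean_space \<Rightarrow> ennreal"
  assumes [measurable]: "f \<in> borel_measurable borel" "g \<in> borel_measurable borel"
  shows "(\<integral>\<^sup>+z. f (fst z) * g (snd z) \<partial>lborel) = (\<integral>\<^sup>+x. f x \<partial>lborel) * (\<integral>\<^sup>+y. g y \<partial>lborel)"
proof -
  have "(\<integral>\<^sup>+z. f (fst z) * g (snd z) \<partial>lborel) = (\<integral>\<^sup>+z. f (fst z) * g (snd z) \<partial>(lborel \<Otimes>\<^sub>M lborel))"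
    by (simp add: lborel_prod)
  also have "\<dots> = (\<integral>\<^sup>+x. \<integral>\<^sup>+y. f x * g y \<partial>lborel \<partial>lborel)"
    by (subst lborel.nn_integral_fst[symmetric]) (auto intro!: measurable_compose[OF measurable_fst] measurable_compose[OF measurable_snd])
  also have "\<dots> = (\<integral>\<^sup>+x. f x * (\<integral>\<^sup>+y. g y \<partial>lborel) \<partial>lborel)"
    by (intro nn_integral_cong nn_integral_cmult) simp
  also have "\<dots> = (\<integral>\<^sup>+x. f x \<partial>lborel) * (\<integral>\<^sup>+y. g y \<partial>lborel)"
    by (rule nn_integral_multc) simp
  finally show ?thesis .
qed

definition gq :: "real \<Rightarrow> real \<Rightarrow> real \<Rightarrow> real \<Rightarrow> R4 \<Rightarrow> real" where
  "gq h1 h2 h3 h4 w = (fst (fst w) / h1)\<^sup>2 + (snd (fst w) / h2)\<^sup>2 + (fst (snd w) / h3)\<^sup>2 + (snd (snd w) / h4)\<^sup>2"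

lemma ennreal_mult4: "0 \<le> a \<Longrightarrow> 0 \<le> b \<Longrightarrow> 0 \<le> c \<Longrightarrow> 0 \<le> d \<Longrightarrow>
  ennreal a * ennreal b * (ennreal c * ennreal d) = ennreal (a * b * (c * d))"
  by (metis ennreal_mult mult_nonneg_nonneg)

lemma gauss4:
  assumes p: "p > 0" and h: "h1 > 0" "h2 > 0" "h3 > 0" "h4 > 0"
  shows "(\<integral>\<^sup>+w. ennreal (exp (- (p * gq h1 h2 h3 h4 w))) \<partial>lborel) =
    ennreal (sqrt (2 * pi) * (h1 / sqrt (2 * p)) * (sqrt (2 * pi) * (h2 / sqrt (2 * p)))
      * (sqrt (2 * pi) * (h3 / sqrt (2 * p)) * (sqrt (2 * pi) * (h4 / sqrt (2 * p)))))"
proof -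
  let ?E = "\<lambda>h u. ennreal (exp (- (p * (u / h)\<^sup>2)))"
  have pt: "ennreal (exp (- (p * gq h1 h2 h3 h4 w))) =
     (?E h1 (fst (fst w)) * ?E h2 (snd (fst w))) * (?E h3 (fst (snd w)) * ?E h4 (snd (snd w)))" for w
  proof -
    have "exp (- (p * gq h1 h2 h3 h4 w)) =
      (exp (- (p * (fst (fst w) / h1)\<^sup>2)) * exp (- (p * (snd (fst w) / h2)\<^sup>2))) *
      (exp (- (p * (fst (snd w) / h3)\<^sup>2)) * exp (- (p * (snd (snd w) / h4)\<^sup>2)))"
      by (simp add: gq_def exp_add[symmetric] algebra_simps)
    then show ?thesis by (simp add: ennreal_mult)
  qed
  have m: "(\<lambda>x. ?E h x) \<in> borel_measurable borel" for h by measurable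
  have m2: "(\<lambda>x::R2. ?E ha (fst x) * ?E hb (snd x)) \<in> borel_measurable borel" if "ha > 0" "hb > 0" for ha hb
  proof -
    have [measurable]: "(\<lambda>x::R2. exp (- (p * (fst x / ha)\<^sup>2))) \<in> borel_measurable borel"
      "(\<lambda>x::R2. exp (- (p * (snd x / hb)\<^sup>2))) \<in> borel_measurable borel"
      using that by (auto intro!: borel_measurable_continuous_onI continuous_intros)
    show ?thesis by measurable
  qed
  have i2: "(\<integral>\<^sup>+x. ?E ha (fst (x::R2)) * ?E hb (snd x) \<partial>lborel) = (\<integral>\<^sup>+x. ?E ha x \<partial>lborel) * (\<integral>\<^sup>+x. ?E hb x \<partial>lborel)" for ha hb
    by (rule nn_integral_prod_split[OF m m])
  have "(\<integral>\<^sup>+w. ennreal (exp (- (p * gq h1 h2 h3 h4 w))) \<partial>lborel) =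
     (\<integral>\<^sup>+w. (\<lambda>x::R2. ?E h1 (fst x) * ?E h2 (snd x)) (fst w) * (\<lambda>x::R2. ?E h3 (fst x) * ?E h4 (snd x)) (snd (w::R4)) \<partial>lborel)"
    unfolding pt by simp
  also have "\<dots> = (\<integral>\<^sup>+x. ?E h1 (fst (x::R2)) * ?E h2 (snd x) \<partial>lborel) * (\<integral>\<^sup>+x. ?E h3 (fst (x::R2)) * ?E h4 (snd x) \<partial>lborel)"
    by (rule nn_integral_prod_split[OF m2[OF h(1) h(2)] m2[OF h(3) h(4)]])
  also have "\<dots> = ennreal (sqrt (2 * pi) * (h1 / sqrt (2 * p)) * (sqrt (2 * pi) * (h2 / sqrt (2 * p)))
      * (sqrt (2 * pi) * (h3 / sqrt (2 * p)) * (sqrt (2 * pi) * (h4 / sqrt (2 * p)))))"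
    unfolding i2 gauss1[OF p h(1)] gauss1[OF p h(2)] gauss1[OF p h(3)] gauss1[OF p h(4)]
    by (rule ennreal_mult4) (use p h in auto)
  finally show ?thesis .
qed

lemma Lnorm_gauss:
  assumes rp: "rp > 0" and h: "h1 > 0" "h2 > 0" "h3 > 0" "h4 > 0"
  shows "Lnorm rp (\<lambda>w. complex_of_real (exp (- gq h1 h2 h3 h4 w))) =
    ennreal ((sqrt (2 * pi) * (h1 / sqrt (2 * (1 / rp))) * (sqrt (2 * pi) * (h2 / sqrt (2 * (1 / rp))))
      * (sqrt (2 * pi) * (h3 / sqrt (2 * (1 / rp))) * (sqrt (2 * pi) * (h4 / sqrt (2 * (1 / rp)))))) powr rp)"
proof -
  have pt: "enn_powr (ennreal (norm (complex_of_real (exp (- gq h1 h2 h3 h4 w))))) (1 / rp)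
      = ennreal (exp (- ((1 / rp) * gq h1 h2 h3 h4 w)))" for w
    by (simp add: enn_powr_def exp_powr_real)
  have "(\<integral>\<^sup>+ w. enn_powr (ennreal (norm (complex_of_real (exp (- gq h1 h2 h3 h4 w))))) (1 / rp) \<partial>lborel)
     = (\<integral>\<^sup>+ w. ennreal (exp (- ((1 / rp) * gq h1 h2 h3 h4 w))) \<partial>lborel)"
    by (rule nn_integral_cong) (rule pt)
  also have "\<dots> = ennreal (sqrt (2 * pi) * (h1 / sqrt (2 * (1 / rp))) * (sqrt (2 * pi) * (h2 / sqrt (2 * (1 / rp))))
      * (sqrt (2 * pi) * (h3 / sqrt (2 * (1 / rp))) * (sqrt (2 * pi) * (h4 / sqrt (2 * (1 / rp))))))"
    by (rule gauss4) (use rp h in auto)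
  finally show ?thesis
    unfolding Lnorm_def using rp h by (simp add: enn_powr_def)
qed

lemma Lnorm_lower:
  fixes h :: "R4 \<Rightarrow> complex"
  assumes rq: "0 \<le> rq" and L: "L > 0" and Z: "Z \<in> sets lborel" and ZV: "emeasure lborel Z = ennreal V"
    and V: "V > 0" and hZ: "\<And>z. z \<in> Z \<Longrightarrow> L \<le> norm (h z)"
  shows "ennreal (L * V powr rq) \<le> Lnorm rq h"
proof (cases "rq = 0")
  case True
  have "ennreal L \<le> esssup lborel (\<lambda>x. ennreal (norm (h x)))"
  proof (rule ccontr)
    assume "\<not> ?thesis"
    then have lt: "esssup lborel (\<lambda>x. ennreal (norm (h x))) < ennreal L" by simp
    have "AE x in lborel. ennreal (norm (h x)) \<le> esssup lborel (\<lambda>x. ennreal (norm (h x)))"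
      by (rule esssup_AE)
    then have "AE x in lborel. x \<notin> Z"
    proof (rule AE_mp[OF _ AE_I2], intro impI)
      fix x assume "ennreal (norm (h x)) \<le> esssup lborel (\<lambda>x. ennreal (norm (h x)))"
      then have "ennreal (norm (h x)) < ennreal L" using lt by simp
      then show "x \<notin> Z" using hZ[of x] by (auto simp: ennreal_less_iff)
    qed
    then have "emeasure lborel Z = 0"
      using AE_iff_measurable[OF Z, of "\<lambda>x. x \<notin> Z"] by simp
    then show False using ZV V by simp
  qed
  then show ?thesis using True V by (simp add: Lnorm_def)
next
  case False
  then have rq0: "rq > 0" using rq by simp
  let ?I = "\<integral>\<^sup>+ x. enn_powr (ennreal (norm (h x))) (1 / rq) \<partial>lborel"
  have "(\<integral>\<^sup>+ x. ennreal (L powr (1 / rq)) * indicator Z x \<partial>lborel) \<le> ?I"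
  proof (rule nn_integral_mono)
    fix x
    show "ennreal (L powr (1 / rq)) * indicator Z x \<le> enn_powr (ennreal (norm (h x))) (1 / rq)"
    proof (cases "x \<in> Z")
      case True
      then have "L powr (1 / rq) \<le> norm (h x) powr (1 / rq)"
        using hZ[OF True] L rq0 by (intro powr_mono2) auto
      then show ?thesis using True by (simp add: enn_powr_def)
    qed simp
  qed
  then have I: "ennreal (L powr (1 / rq) * V) \<le> ?I"
    using Z ZV L V by (simp add: nn_integral_cmult_indicator ennreal_mult)
  show ?thesis
  proof (cases "?I = \<infinity>")
    case True then show ?thesis using False by (simp add: Lnorm_def enn_powr_def)
  next
    case inf: False
    then obtain r where r: "?I = ennreal r" "r \<ge> 0" using ennreal_cases[of ?I] by auto
    then have lr: "L powr (1 / rq) * V \<le> r" using I L V by (simp add: ennreal_le_iff)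
    have "L * V powr rq = (L powr (1 / rq) * V) powr rq"
      using L V rq0 by (simp add: powr_mult powr_powr)
    also have "\<dots> \<le> r powr rq" using lr L V rq0 by (intro powr_mono2) auto
    finally show ?thesis using False r by (simp add: Lnorm_def enn_powr_def)
  qed
qed

lemma box2: "a1 \<le> b1 \<Longrightarrow> a2 \<le> b2 \<Longrightarrow> emeasure lborel (cbox (a1, a2) (b1, b2) :: R2 set) = ennreal ((b1 - a1) * (b2 - a2))"
  by (simp add: emeasure_lborel_cbox_eq Basis_prod_def prod.union_disjoint inner_Pair prod.reindex inj_on_def)
lemma box4: "a1 \<le> b1 \<Longrightarrow> a2 \<le> b2 \<Longrightarrow> a3 \<le> b3 \<Longrightarrow> a4 \<le> b4 \<Longrightarrow> emeasure lborel (cbox ((a1, a2), (a3, a4)) ((b1, b2), (b3, b4)) :: R4 set) = ennreal ((b1 - a1) * (b2 - a2) * ((b3 - a3) * (b4 - a4)))"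
  by (simp add: emeasure_lborel_cbox_eq Basis_prod_def prod.union_disjoint inner_Pair prod.reindex inj_on_def zero_prod_def)

lemma final_ineq:
  fixes X Y a b :: real
  assumes X: "X > 0" and Y: "Y > 0"
    and H: "\<And>\<delta>. 0 < \<delta> \<Longrightarrow> \<delta> \<le> 1 \<Longrightarrow> X * \<delta> powr a \<le> Y * \<delta> powr b"
  shows "b \<le> a"
proof (rule ccontr)
  assume "\<not> b \<le> a"
  define e where "e = a - b"
  have e: "e < 0" using \<open>\<not> b \<le> a\<close> by (simp add: e_def)
  define K where "K = Y / X + 1"
  have K1: "K > 1" using X Y by (simp add: K_def)
  define \<delta> where "\<delta> = K powr (1 / e)"
  have d0: "\<delta> > 0" using K1 by (simp add: \<delta>_def)
  have "\<delta> \<le> K powr 0" unfolding \<delta>_def using K1 e by (intro powr_mono) (auto simp: divide_neg_pos)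
  then have d1: "\<delta> \<le> 1" using K1 by simp
  have de: "\<delta> powr e = K" using K1 e by (simp add: \<delta>_def powr_powr)
  have "X * (\<delta> powr e * \<delta> powr b) \<le> Y * \<delta> powr b"
    using H[OF d0 d1] by (simp add: e_def powr_add[symmetric])
  then have "X * \<delta> powr e * \<delta> powr b \<le> Y * \<delta> powr b" by (simp add: mult.assoc)
  then have "X * \<delta> powr e \<le> Y" using d0 by (simp add: mult_le_cancel_right)
  then have "X * K \<le> Y" by (simp add: de)
  moreover have "X * K = Y + X" using X by (simp add: K_def field_simps)
  ultimately show False using X by linarith
qed

lemma mem_cbox_R4: "(z::R4) \<in> cbox ((a1, a2), (a3, a4)) ((b1, b2), (b3, b4)) \<longleftrightarrow>
   a1 \<le> fst (fst z) \<and> fst (fst z) \<le> b1 \<and> a2 \<le> snd (fst z) \<and> snd (fst z) \<le> b2 \<and>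
   a3 \<le> fst (snd z) \<and> fst (snd z) \<le> b3 \<and> a4 \<le> snd (snd z) \<and> snd (snd z) \<le> b4"
proof -
  have "z \<in> cbox ((a1, a2), (a3, a4)) ((b1, b2), (b3, b4)) \<longleftrightarrow>
      fst z \<in> cbox (a1, a2) (b1, b2) \<and> snd z \<in> cbox (a3, a4) (b3, b4)"
    by (cases z) (simp add: cbox_Pair_iff)
  then show ?thesis by (simp add: mem_cbox_R2)
qed

lemma norm_R4_sq: "(norm (w::R4))\<^sup>2 = (fst (fst w))\<^sup>2 + (snd (fst w))\<^sup>2 + (fst (snd w))\<^sup>2 + (snd (snd w))\<^sup>2"
proof -
  obtain a b c d where "w = ((a, b), (c, d))" by (metis prod.collapse)
  then show ?thesis by (simp add: norm_Pair)
qed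

lemma sq_div_ge: "0 < h \<Longrightarrow> h \<le> 1 \<Longrightarrow> x\<^sup>2 \<le> (x / (h::real))\<^sup>2"
proof -
  assume h: "0 < h" "h \<le> 1"
  have "h\<^sup>2 \<le> 1" using h by (simp add: power_le_one)
  then have "x\<^sup>2 * h\<^sup>2 \<le> x\<^sup>2" by (simp add: mult_left_le)
  then show ?thesis using h by (simp add: power_divide le_divide_eq)
qed

lemma sq_ratio_bound:
  fixes a b h R :: real
  assumes "\<bar>a\<bar> \<le> h" "\<bar>b\<bar> \<le> h * R" "h > 0"
  shows "((a - b) / h)\<^sup>2 \<le> (1 + R)\<^sup>2"
proof -
  have "\<bar>a - b\<bar> \<le> h * (1 + R)" using assms by (simp add: algebra_simps)
  then have "\<bar>(a - b) / h\<bar> \<le> 1 + R" using assms by (simp add: divide_le_eq mult.commute)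
  then have "\<bar>(a - b) / h\<bar>\<^sup>2 \<le> (1 + R)\<^sup>2" by (intro power_mono) auto
  then show ?thesis by (simp only: power2_abs)
qed

lemma gq_pexp:
  "\<exists>qq. \<forall>w. peval qq w = gq h1 h2 h3 h4 w"
proof -
  let ?T = "\<lambda>e h. PMul (PConst (1 / h\<^sup>2)) (PMul (PCoord e) (PCoord e))"
  show ?thesis
    by (rule exI[of _ "PAdd (PAdd (PAdd (?T ((1,0),(0,0)) h1) (?T ((0,1),(0,0)) h2)) (?T ((0,0),(1,0)) h3)) (?T ((0,0),(0,1)) h4)"])
       (simp add: gq_def power_divide power2_eq_square inner_Pair)
qed

lemma schwartz_gq:
  assumes h: "0 < h1" "h1 \<le> 1" "0 < h2" "h2 \<le> 1" "0 < h3" "h3 \<le> 1" "0 < h4" "h4 \<le> 1"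
  shows "schwartz (\<lambda>w. complex_of_real (exp (- gq h1 h2 h3 h4 w)))"
proof -
  obtain qq where qq: "\<And>w. peval qq w = gq h1 h2 h3 h4 w" using gq_pexp by blast
  have "peval qq w \<ge> 1 * (norm w)\<^sup>2" for w
    unfolding qq norm_R4_sq gq_def
    using sq_div_ge[OF h(1,2), of "fst (fst w)"] sq_div_ge[OF h(3,4), of "snd (fst w)"]
      sq_div_ge[OF h(5,6), of "fst (snd w)"] sq_div_ge[OF h(7,8), of "snd (snd w)"]
    by simp
  then have "schwartz (\<lambda>x. complex_of_real (exp (- peval qq x)))"
    by (intro schwartz_gauss[of 1]) auto
  then show ?thesis by (simp add: qq)
qed

lemma cont_gq: "h1 \<noteq> 0 \<Longrightarrow> h2 \<noteq> 0 \<Longrightarrow> h3 \<noteq> 0 \<Longrightarrow> h4 \<noteq> 0 \<Longrightarrow> continuous_on UNIV (gq h1 h2 h3 h4)"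
  unfolding gq_def by (intro continuous_intros) auto

theorem proposition4p5:
  fixes \<alpha>1 \<alpha>2 m a b c d \<sigma> :: real and \<phi> :: "R2 \<Rightarrow> R2" and rp rq :: real
  assumes alpha_pos: "\<alpha>1 > 0" "\<alpha>2 > 0" and alpha_ne: "\<alpha>1 \<noteq> \<alpha>2"
    and H1: "real_analytic_on2 (\<lambda>x. fst (\<phi> x)) (cone \<alpha>1 \<alpha>2 a b)"
            "real_analytic_on2 (\<lambda>x. snd (\<phi> x)) (cone \<alpha>1 \<alpha>2 a b)"
    and H2: "m \<ge> 3 * (\<alpha>1 + \<alpha>2)"
            "\<forall>x\<in>cone \<alpha>1 \<alpha>2 a b. \<forall>t>0. \<phi> (dil \<alpha>1 \<alpha>2 t x) = t powr m *\<^sub>R \<phi> x"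
    and H3: "a < c" "c < d" "d < b" "c \<le> \<sigma>" "\<sigma> \<le> d"
            "{x \<in> closure (cone \<alpha>1 \<alpha>2 c d) - {0}. \<not> elliptic \<phi> x}
               = {dil \<alpha>1 \<alpha>2 t (1, \<sigma>) | t. t > 0}"
    and H4: "\<exists>n1 n2 :: nat. \<exists>D \<delta> :: real. n1 > 0 \<and> n2 > 0 \<and> D > 0 \<and> \<delta> > 0 \<and>
              (c < \<sigma> \<and> \<sigma> \<le> d \<longrightarrow>
                 (\<forall>s. \<sigma> - \<delta> < s \<and> s < \<sigma> \<longrightarrow> (\<forall>t>0.
                    minQ \<phi> (dil \<alpha>1 \<alpha>2 t (1, s))
                      \<ge> D * t powr (2 * (m - \<alpha>1 - \<alpha>2)) * \<bar>s - \<sigma>\<bar> ^ n1))) \<and>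
              (c \<le> \<sigma> \<and> \<sigma> < d \<longrightarrow>
                 (\<forall>s. \<sigma> < s \<and> s < \<sigma> + \<delta> \<longrightarrow> (\<forall>t>0.
                    minQ \<phi> (dil \<alpha>1 \<alpha>2 t (1, s))
                      \<ge> D * t powr (2 * (m - \<alpha>1 - \<alpha>2)) * \<bar>s - \<sigma>\<bar> ^ n2))) \<and>
              real (max n1 n2) < 2 * m / (\<alpha>1 + \<alpha>2) - 3"
    and E: "(rp, rq) \<in> type_set (graph_measure \<phi> (cone1 \<alpha>1 \<alpha>2 c d))"
  shows "rq \<ge> rp - (\<alpha>1 + \<alpha>2) / (\<alpha>1 + \<alpha>2 + 2 * m)"
proof -
  from E obtain C where rng: "0 \<le> rp" "rp \<le> 1" "0 \<le> rq" "rq \<le> 1" and C0: "C > 0"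
      and Cb: "\<And>f. schwartz f \<Longrightarrow> Lnorm rq (meas_conv (graph_measure \<phi> (cone1 \<alpha>1 \<alpha>2 c d)) f) \<le> ennreal C * Lnorm rp f"
    unfolding type_set_def by blast
  define A where "A = \<alpha>1 + \<alpha>2"
  define M where "M = A + 2 * m"
  have A0: "A > 0" using alpha_pos by (simp add: A_def)
  have m0: "m > 0" using H2(1) A0 by (simp add: A_def)
  have M0: "M > 0" using A0 m0 by (simp add: M_def)
  have goal_eq: "(\<alpha>1 + \<alpha>2) / (\<alpha>1 + \<alpha>2 + 2 * m) = A / M" by (simp add: A_def M_def)
  show ?thesis
  proof (cases "rp = 0")
    case True
    have "A / M \<ge> 0" using A0 M0 by simp
    then show ?thesis using True rng goal_eq by simp
  next
    case False
    then have rp0: "rp > 0" using rng by simp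
    define W where "W = cone1 \<alpha>1 \<alpha>2 c d"
    have Wopen: "open W" unfolding W_def by (rule open_cone1[OF alpha_pos])
    have Wcone: "W \<subseteq> cone \<alpha>1 \<alpha>2 a b" unfolding W_def by (rule cone1_sub_cone) (use H3 in auto)
    have Wsets: "W \<in> sets lborel" using Wopen by simp
    have phicont: "isCont \<phi> x" if "x \<in> cone \<alpha>1 \<alpha>2 a b" for x
    proof -
      have "isCont (\<lambda>x. (fst (\<phi> x), snd (\<phi> x))) x"
        by (intro continuous_Pair analytic_isCont[OF H1(1) that] analytic_isCont[OF H1(2) that])
      then show ?thesis by simp
    qed
    define p0 where "p0 = dil \<alpha>1 \<alpha>2 (1/2) (1, (c + d) / 2)"
    have p0W: "p0 \<in> W" unfolding W_def cone1_def p0_def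
      by (intro CollectI exI[of _ "(c + d) / 2"] exI[of _ "1/2"]) (use H3 in auto)
    obtain r1 where r1: "r1 > 0" "ball p0 r1 \<subseteq> W" using Wopen p0W open_contains_ball by blast
    have "\<exists>d>0. \<forall>x. dist x p0 < d \<longrightarrow> dist (\<phi> x) (\<phi> p0) < 1"
      using phicont[OF subsetD[OF Wcone p0W]] unfolding continuous_at_eps_delta by simp
    then obtain r2 where r2: "r2 > 0" "\<And>x. dist x p0 < r2 \<Longrightarrow> dist (\<phi> x) (\<phi> p0) < 1" by blast
    define \<rho> where "\<rho> = min r1 r2 / 2"
    have \<rho>0: "\<rho> > 0" using r1 r2 by (simp add: \<rho>_def)
    define Q where "Q = cbox (fst p0 - \<rho>, snd p0 - \<rho>) (fst p0 + \<rho>, snd p0 + \<rho>)"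
    have Qmem: "fst p0 - \<rho> \<le> fst q" "fst q \<le> fst p0 + \<rho>" "snd p0 - \<rho> \<le> snd q" "snd q \<le> snd p0 + \<rho>"
      if "q \<in> Q" for q
      using that unfolding Q_def mem_cbox_R2 by auto
    have Qdist: "dist q p0 < min r1 r2" if "q \<in> Q" for q
    proof -
      have q: "\<bar>fst q - fst p0\<bar> \<le> \<rho>" "\<bar>snd q - snd p0\<bar> \<le> \<rho>"
        using Qmem[OF that] by (simp_all add: abs_le_iff)
      have sq: "(fst q - fst p0)\<^sup>2 \<le> \<rho>\<^sup>2" "(snd q - snd p0)\<^sup>2 \<le> \<rho>\<^sup>2"
        using power_mono[OF q(1), of 2] power_mono[OF q(2), of 2] by simp_all
      have "dist q p0 = sqrt ((fst q - fst p0)\<^sup>2 + (snd q - snd p0)\<^sup>2)"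
        by (cases q, cases p0) (simp add: dist_Pair_Pair dist_real_def)
      also have "\<dots> \<le> sqrt (2 * \<rho>\<^sup>2)" by (rule real_sqrt_le_mono) (use sq in simp)
      also have "\<dots> < sqrt ((2 * \<rho>)\<^sup>2)" by (rule real_sqrt_less_mono) (use \<rho>0 in simp)
      also have "\<dots> = \<bar>2 * \<rho>\<bar>" by (rule real_sqrt_abs)
      also have "\<dots> = 2 * \<rho>" using \<rho>0 by simp
      also have "\<dots> = min r1 r2" by (simp add: \<rho>_def)
      finally show ?thesis .
    qed
    have QW: "Q \<subseteq> W"
    proof
      fix q assume "q \<in> Q"
      then have "dist q p0 < r1" using Qdist by fastforce
      then have "dist p0 q < r1" by (simp add: dist_commute)
      then show "q \<in> W" using r1 by auto
    qed
    define R where "R = \<bar>fst p0\<bar> + \<bar>snd p0\<bar> + \<rho> + \<bar>fst (\<phi> p0)\<bar> + \<bar>snd (\<phi> p0)\<bar> + 1"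
    have Qbd: "\<bar>fst q\<bar> \<le> R" "\<bar>snd q\<bar> \<le> R" "\<bar>fst (\<phi> q)\<bar> \<le> R" "\<bar>snd (\<phi> q)\<bar> \<le> R" if "q \<in> Q" for q
    proof -
      have d: "dist (\<phi> q) (\<phi> p0) < 1" using r2(2) Qdist[OF that] by simp
      have d1: "\<bar>fst (\<phi> q) - fst (\<phi> p0)\<bar> < 1" using d dist_fst_le[of "\<phi> q" "\<phi> p0"] by (simp add: dist_real_def)
      have d2: "\<bar>snd (\<phi> q) - snd (\<phi> p0)\<bar> < 1" using d dist_snd_le[of "\<phi> q" "\<phi> p0"] by (simp add: dist_real_def)
      note z = abs_ge_zero[of "fst p0"] abs_ge_zero[of "snd p0"] abs_ge_zero[of "fst (\<phi> p0)"] abs_ge_zero[of "snd (\<phi> p0)"]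
        abs_ge_self[of "fst p0"] abs_ge_self[of "snd p0"] abs_ge_self[of "fst (\<phi> p0)"] abs_ge_self[of "snd (\<phi> p0)"]
        abs_ge_minus_self[of "fst p0"] abs_ge_minus_self[of "snd p0"] abs_ge_minus_self[of "fst (\<phi> p0)"] abs_ge_minus_self[of "snd (\<phi> p0)"]
      show "\<bar>fst q\<bar> \<le> R" "\<bar>snd q\<bar> \<le> R"
        using Qmem[OF that] z \<rho>0 unfolding abs_le_iff R_def by linarith+
      show "\<bar>fst (\<phi> q)\<bar> \<le> R" "\<bar>snd (\<phi> q)\<bar> \<le> R"
        using d1 d2 z \<rho>0 unfolding abs_le_iff abs_less_iff R_def by linarith+
    qed
    have R0: "R \<ge> 0" unfolding R_def using \<rho>0 by simp
    define c1 where "c1 = (sqrt (2 * pi) / sqrt (2 * (1 / rp))) ^ 4"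
    have c10: "c1 > 0" using rp0 by (simp add: c1_def)
    define \<kappa> where "\<kappa> = exp (- (4 * (1 + R)\<^sup>2))"
    define X where "X = \<kappa> * (4 * \<rho>\<^sup>2) * 16 powr rq"
    define Y where "Y = C * c1 powr rp"
    have X0: "X > 0" using \<rho>0 by (simp add: X_def \<kappa>_def)
    have Y0: "Y > 0" using C0 c10 by (simp add: Y_def)
    have key: "X * \<delta> powr (A + M * rq) \<le> Y * \<delta> powr (M * rp)" if \<delta>: "0 < \<delta>" "\<delta> \<le> 1" for \<delta>
    proof -
      define h1 where "h1 = \<delta> powr \<alpha>1"
      define h2 where "h2 = \<delta> powr \<alpha>2"
      define h3 where "h3 = \<delta> powr m"
      define h4 where "h4 = \<delta> powr m"
      have hpos: "0 < h1" "h1 \<le> 1" "0 < h2" "h2 \<le> 1" "0 < h3" "h3 \<le> 1" "0 < h4" "h4 \<le> 1"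
        using \<delta> alpha_pos m0 by (simp_all add: h1_def h2_def h3_def h4_def powr_le1)
      define f where "f = (\<lambda>w. complex_of_real (exp (- gq h1 h2 h3 h4 w)))"
      have fS: "schwartz f" unfolding f_def by (rule schwartz_gq[OF hpos])
      define M0 where "M0 = restrict_space lborel W"
      define G where "G = (\<lambda>x::R2. (x, \<phi> x))"
      have mu: "graph_measure \<phi> (cone1 \<alpha>1 \<alpha>2 c d) = distr M0 borel G"
        by (simp add: graph_measure_def M0_def W_def G_def)
      have spaceM0: "space M0 = W" by (simp add: M0_def space_restrict_space)
      have Gcont: "continuous_on W G"
      proof -
        have "continuous_on W \<phi>"
          using phicont Wcone by (intro continuous_at_imp_continuous_on) auto
        then show ?thesis unfolding G_def by (intro continuous_intros)
      qed
      have Gmeas: "G \<in> measurable M0 borel"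
      proof -
        have "G \<in> borel_measurable (restrict_space borel W)"
          by (rule borel_measurable_continuous_on_restrict[OF Gcont])
        moreover have "sets M0 = sets (restrict_space borel W)"
          unfolding M0_def by (rule sets_restrict_space_cong) simp
        ultimately show ?thesis using measurable_cong_sets by blast
      qed
      have finM0: "finite_measure M0"
      proof (rule finite_measureI)
        have "emeasure M0 (space M0) = emeasure M0 W" by (simp add: spaceM0)
        also have "\<dots> = emeasure lborel W"
          unfolding M0_def by (rule emeasure_restrict_space) (use Wsets in auto)
        also have "\<dots> \<le> emeasure lborel (cbox (0::real, - (\<bar>c\<bar> + \<bar>d\<bar>)) (1, \<bar>c\<bar> + \<bar>d\<bar>))"
          unfolding W_def by (rule Measure_Space.emeasure_mono[OF cone1_bounded[OF alpha_pos]]) simp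
        also have "\<dots> < \<infinity>" by (rule emeasure_lborel_cbox_finite)
        finally show "emeasure M0 (space M0) \<noteq> \<infinity>" by simp
      qed
      have hne: "h1 \<noteq> 0" "h2 \<noteq> 0" "h3 \<noteq> 0" "h4 \<noteq> 0" using hpos by auto
      have gqcont: "continuous_on UNIV (gq h1 h2 h3 h4)" by (rule cont_gq[OF hne])
      have gq_nonneg: "0 \<le> gq h1 h2 h3 h4 w" for w by (simp add: gq_def)
      have Fcont: "continuous_on UNIV (\<lambda>y::R4. exp (- gq h1 h2 h3 h4 (z - y)))" for z
        by (intro continuous_intros continuous_on_compose2[OF gqcont]) auto
      have Fmeas: "(\<lambda>y::R4. exp (- gq h1 h2 h3 h4 (z - y))) \<in> borel_measurable borel" for z
        by (rule borel_measurable_continuous_onI[OF Fcont])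
      have fmeas: "(\<lambda>y::R4. f (z - y)) \<in> borel_measurable borel" for z
        unfolding f_def by (intro borel_measurable_continuous_onI continuous_intros continuous_on_compose2[OF gqcont]) auto
      define Qd where "Qd = cbox (h1 * (fst p0 - \<rho>), h2 * (snd p0 - \<rho>)) (h1 * (fst p0 + \<rho>), h2 * (snd p0 + \<rho>))"
      have Qd_props: "x \<in> W \<and> \<bar>fst x\<bar> \<le> h1 * R \<and> \<bar>snd x\<bar> \<le> h2 * R \<and> \<bar>fst (\<phi> x)\<bar> \<le> h3 * R \<and> \<bar>snd (\<phi> x)\<bar> \<le> h4 * R"
        if xQd: "x \<in> Qd" for x
      proof -
        define q where "q = (fst x / h1, snd x / h2)"
        have qQ: "q \<in> Q"
          using xQd hpos unfolding Qd_def Q_def mem_cbox_R2 q_def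
          by (simp add: pos_le_divide_eq pos_divide_le_eq mult.commute)
        have xq: "x = dil \<alpha>1 \<alpha>2 \<delta> q"
          using hpos by (simp add: dil_def q_def h1_def[symmetric] h2_def[symmetric])
        have xW: "x \<in> W" unfolding xq W_def
          by (rule dil_cone1[OF _ \<delta>]) (use QW qQ W_def in auto)
        have "\<phi> x = \<delta> powr m *\<^sub>R \<phi> q" unfolding xq
          using H2(2) Wcone QW qQ \<delta> by auto
        then have ph: "fst (\<phi> x) = h3 * fst (\<phi> q)" "snd (\<phi> x) = h4 * snd (\<phi> q)"
          by (simp_all add: h3_def h4_def)
        have fx: "fst x = h1 * fst q" "snd x = h2 * snd q" using hpos by (simp_all add: q_def)
        have b: "\<bar>fst q\<bar> \<le> R" "\<bar>snd q\<bar> \<le> R" "\<bar>fst (\<phi> q)\<bar> \<le> R" "\<bar>snd (\<phi> q)\<bar> \<le> R"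
          using Qbd[OF qQ] by auto
        show ?thesis
          using xW b hpos by (simp add: ph fx abs_mult mult_left_mono)
      qed
      have QdW: "Qd \<subseteq> W" using Qd_props by blast
      have Qd_meas: "measure lborel Qd = 4 * \<rho>\<^sup>2 * \<delta> powr A"
      proof -
        have le: "h1 * (fst p0 - \<rho>) \<le> h1 * (fst p0 + \<rho>)" "h2 * (snd p0 - \<rho>) \<le> h2 * (snd p0 + \<rho>)"
          using hpos \<rho>0 by (simp_all add: mult_left_mono)
        have "emeasure lborel Qd = ennreal ((h1 * (fst p0 + \<rho>) - h1 * (fst p0 - \<rho>)) * (h2 * (snd p0 + \<rho>) - h2 * (snd p0 - \<rho>)))"
          unfolding Qd_def by (rule box2[OF le])
        also have "(h1 * (fst p0 + \<rho>) - h1 * (fst p0 - \<rho>)) * (h2 * (snd p0 + \<rho>) - h2 * (snd p0 - \<rho>)) = 4 * \<rho>\<^sup>2 * (h1 * h2)"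
          by (simp add: algebra_simps power2_eq_square)
        also have "h1 * h2 = \<delta> powr A" by (simp add: h1_def h2_def A_def powr_add)
        finally show ?thesis using \<rho>0 \<delta> by (simp add: measure_def)
      qed
      define L where "L = \<kappa> * (4 * \<rho>\<^sup>2 * \<delta> powr A)"
      have L0: "L > 0" using \<rho>0 \<delta> by (simp add: L_def \<kappa>_def)
      define Z where "Z = cbox ((- h1, - h2), (- h3, - h4)) ((h1, h2), (h3, h4))"
      have lowconv: "L \<le> norm (meas_conv (graph_measure \<phi> (cone1 \<alpha>1 \<alpha>2 c d)) f z)" if zZ: "z \<in> Z" for z
      proof -
        have "meas_conv (graph_measure \<phi> (cone1 \<alpha>1 \<alpha>2 c d)) f z = (\<integral>y. f (z - y) \<partial>(distr M0 borel G))"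
          by (simp add: meas_conv_def mu)
        also have "\<dots> = (\<integral>x. f (z - G x) \<partial>M0)"
          by (rule integral_distr[OF Gmeas fmeas])
        also have "\<dots> = complex_of_real (\<integral>x. exp (- gq h1 h2 h3 h4 (z - G x)) \<partial>M0)"
          by (simp add: f_def)
        finally have eq: "meas_conv (graph_measure \<phi> (cone1 \<alpha>1 \<alpha>2 c d)) f z = complex_of_real (\<integral>x. exp (- gq h1 h2 h3 h4 (z - G x)) \<partial>M0)" .
        have intg: "integrable M0 (\<lambda>x. exp (- gq h1 h2 h3 h4 (z - G x)))"
        proof (rule finite_measure.integrable_const_bound[OF finM0, where B = 1])
          show "AE x in M0. norm (exp (- gq h1 h2 h3 h4 (z - G x))) \<le> 1"
            using gq_nonneg by (intro AE_I2) simp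
          show "(\<lambda>x. exp (- gq h1 h2 h3 h4 (z - G x))) \<in> borel_measurable M0"
            using measurable_compose[OF Gmeas Fmeas[of z]] by simp
        qed
        have zb: "\<bar>fst (fst z)\<bar> \<le> h1" "\<bar>snd (fst z)\<bar> \<le> h2" "\<bar>fst (snd z)\<bar> \<le> h3" "\<bar>snd (snd z)\<bar> \<le> h4"
          using zZ unfolding Z_def mem_cbox_R4 by (simp_all add: abs_le_iff)
        have intle: "(\<integral>x. \<kappa> * indicator Qd x \<partial>M0) \<le> (\<integral>x. exp (- gq h1 h2 h3 h4 (z - G x)) \<partial>M0)"
        proof (rule integral_mono'[OF intg])
          fix x assume "x \<in> space M0"
          show "\<kappa> * indicator Qd x \<le> exp (- gq h1 h2 h3 h4 (z - G x))"
          proof (cases "x \<in> Qd")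
            case True
            note P = Qd_props[OF True]
            have "gq h1 h2 h3 h4 (z - G x) =
                ((fst (fst z) - fst x) / h1)\<^sup>2 + ((snd (fst z) - snd x) / h2)\<^sup>2 +
                ((fst (snd z) - fst (\<phi> x)) / h3)\<^sup>2 + ((snd (snd z) - snd (\<phi> x)) / h4)\<^sup>2"
              by (simp add: gq_def G_def)
            also have "\<dots> \<le> (1 + R)\<^sup>2 + (1 + R)\<^sup>2 + (1 + R)\<^sup>2 + (1 + R)\<^sup>2"
              using P zb hpos
              by (intro add_mono sq_ratio_bound) auto
            finally have "gq h1 h2 h3 h4 (z - G x) \<le> 4 * (1 + R)\<^sup>2" by simp
            then show ?thesis using True by (simp add: \<kappa>_def)
          qed simp
        qed simp
        have inteq: "(\<integral>x. \<kappa> * indicator Qd x \<partial>M0) = \<kappa> * measure lborel Qd"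
        proof -
          have "measure M0 (Qd \<inter> space M0) = measure M0 Qd"
            using QdW by (simp add: spaceM0 Int_absorb2)
          also have "\<dots> = measure lborel Qd"
            unfolding M0_def by (rule measure_restrict_space) (use Wsets QdW in auto)
          finally have "measure M0 (Qd \<inter> space M0) = measure lborel Qd" .
          then show ?thesis by simp
        qed
        have "L = (\<integral>x. \<kappa> * indicator Qd x \<partial>M0)"
          unfolding inteq Qd_meas L_def ..
        then have "L \<le> (\<integral>x. exp (- gq h1 h2 h3 h4 (z - G x)) \<partial>M0)"
          using intle by simp
        then show ?thesis unfolding eq by simp
      qed
      have Zle: "- h1 \<le> h1" "- h2 \<le> h2" "- h3 \<le> h3" "- h4 \<le> h4" using hpos by auto
      have Zmeas: "emeasure lborel Z = ennreal (16 * \<delta> powr M)"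
      proof -
        have "emeasure lborel Z = ennreal ((h1 - - h1) * (h2 - - h2) * ((h3 - - h3) * (h4 - - h4)))"
          unfolding Z_def by (rule box4[OF Zle])
        also have "(h1 - - h1) * (h2 - - h2) * ((h3 - - h3) * (h4 - - h4)) = 16 * (h1 * h2 * (h3 * h4))"
          by (simp add: algebra_simps)
        also have "h1 * h2 * (h3 * h4) = \<delta> powr M"
          by (simp add: h1_def h2_def h3_def h4_def M_def A_def powr_add[symmetric] algebra_simps)
        finally show ?thesis .
      qed
      have Zsets: "Z \<in> sets lborel" unfolding Z_def by simp
      have low: "ennreal (L * (16 * \<delta> powr M) powr rq) \<le> Lnorm rq (meas_conv (graph_measure \<phi> (cone1 \<alpha>1 \<alpha>2 c d)) f)"
        by (rule Lnorm_lower[OF rng(3) L0 Zsets Zmeas _ lowconv]) (use \<delta> in simp)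
      have prodG: "sqrt (2 * pi) * (h1 / sqrt (2 * (1 / rp))) * (sqrt (2 * pi) * (h2 / sqrt (2 * (1 / rp))))
          * (sqrt (2 * pi) * (h3 / sqrt (2 * (1 / rp))) * (sqrt (2 * pi) * (h4 / sqrt (2 * (1 / rp)))))
          = c1 * \<delta> powr M"
      proof -
        have "h1 * h2 * (h3 * h4) = \<delta> powr M"
          by (simp add: h1_def h2_def h3_def h4_def M_def A_def powr_add[symmetric] algebra_simps)
        moreover have "sqrt (2 * pi) * (h1 / sqrt (2 * (1 / rp))) * (sqrt (2 * pi) * (h2 / sqrt (2 * (1 / rp))))
          * (sqrt (2 * pi) * (h3 / sqrt (2 * (1 / rp))) * (sqrt (2 * pi) * (h4 / sqrt (2 * (1 / rp)))))
          = c1 * (h1 * h2 * (h3 * h4))"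
          by (simp add: c1_def power4_eq_xxxx field_simps)
        ultimately show ?thesis by simp
      qed
      have up: "Lnorm rp f = ennreal ((c1 * \<delta> powr M) powr rp)"
        unfolding f_def Lnorm_gauss[OF rp0 hpos(1) hpos(3) hpos(5) hpos(7)] prodG ..
      have "ennreal (L * (16 * \<delta> powr M) powr rq) \<le> ennreal C * ennreal ((c1 * \<delta> powr M) powr rp)"
        using low Cb[OF fS] up by simp
      also have "\<dots> = ennreal (C * (c1 * \<delta> powr M) powr rp)" using C0 by (simp add: ennreal_mult)
      finally have ineq: "L * (16 * \<delta> powr M) powr rq \<le> C * (c1 * \<delta> powr M) powr rp"
        using C0 by (simp add: ennreal_le_iff)
      have lhs: "L * (16 * \<delta> powr M) powr rq = X * \<delta> powr (A + M * rq)"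
        using \<delta> by (simp add: L_def X_def powr_mult powr_powr powr_add)
      have rhs: "C * (c1 * \<delta> powr M) powr rp = Y * \<delta> powr (M * rp)"
        using \<delta> c10 by (simp add: Y_def powr_mult powr_powr)
      show ?thesis using ineq lhs rhs by simp
    qed
    have "M * rp \<le> A + M * rq" by (rule final_ineq[OF X0 Y0 key])
    then have "rp - A / M \<le> rq" using M0 by (simp add: field_simps)
    then show ?thesis using goal_eq by simp
  qed
qed

end
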